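(* Let $(R,\mathfrak{m})$ satisfy condition $\bigstar$. Then $\bar{T}(R)+pR=\{t+x: t\in\bar{T}(R),\ x\in pR\}$ is a subring of $R$ with the same residue field as $R$. More generally, for any ideal $I$ of $R$ containing $\mathfrak{m}^2+pR$, the set $\bar{T}(R)+I$ is a subring of $R$ with the same residue field as $R$.
   Context: All rings are commutative and unital. Condition $\bigstar$ on a ring $(R,\mathfrak{m})$: $R$ is a local ring (unique maximal ideal $\mathfrak{m}$, not necessarily Noetherian) of characteristic $p^N$ for a prime $p$ and some $N\ge 1$, with finite residue field $R/\mathfrak{m}\cong\mathbb{F}_q$, and $\mathfrak{m}$ is a nilpotent ideal. $T(R)$ is the unique subgroup of $R^\times$ mapping isomorphically onto $\mathbb{F}_q^\times$ under reduction mod $\mathfrak{m}$, and $\bar{T}(R)=T(R)\cup\{0\}$. A subring $S$ is local with $\mathfrak{m}_S=\mathfrak{m}\cap S$ and its residue field is naturally a subfield of $R/\mathfrak{m}$. *)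

theory Defs
  imports "HOL-Computational_Algebra.Primes"
begin

text \<open>All rings are the whole carrier of a type of class comm_ring_1.\<close>

definition is_ideal :: "'a::comm_ring_1 set \<Rightarrow> bool" where
  "is_ideal I \<longleftrightarrow> 0 \<in> I \<and> (\<forall>x\<in>I. \<forall>y\<in>I. x + y \<in> I) \<and> (\<forall>r. \<forall>x\<in>I. r * x \<in> I)"

definition maximal_ideal :: "'a::comm_ring_1 set \<Rightarrow> bool" where
  "maximal_ideal M \<longleftrightarrow> is_ideal M \<and> M \<noteq> UNIV \<and>
     (\<forall>J. is_ideal J \<and> M \<subseteq> J \<longrightarrow> J = M \<or> J = UNIV)"

definition nilpotent_ideal :: "'a::comm_ring_1 set \<Rightarrow> bool" where
  "nilpotent_ideal I \<longleftrightarrow> (\<exists>n. \<forall>xs. length xs = n \<and> set xs \<subseteq> I \<longrightarrow> prod_list xs = 0)"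

definition res_class :: "'a::comm_ring_1 set \<Rightarrow> 'a \<Rightarrow> 'a set" where
  "res_class M x = {y. y - x \<in> M}"

definition residue_ring :: "'a::comm_ring_1 set \<Rightarrow> 'a set set" where
  "residue_ring M = range (res_class M)"

definition cond_star :: "'a::comm_ring_1 set \<Rightarrow> nat \<Rightarrow> nat \<Rightarrow> nat \<Rightarrow> bool" where
  "cond_star m p N q \<longleftrightarrow>
     maximal_ideal m \<and> (\<forall>M. maximal_ideal M \<longrightarrow> M = m) \<and>
     prime p \<and> N \<ge> 1 \<and> CHAR('a) = p ^ N \<and>
     finite (residue_ring m) \<and> card (residue_ring m) = q \<and>
     nilpotent_ideal m"

definition unit_subgroup :: "'a::comm_ring_1 set \<Rightarrow> bool" where
  "unit_subgroup G \<longleftrightarrow> G \<subseteq> {x. x dvd 1} \<and> 1 \<in> G \<and>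
     (\<forall>x\<in>G. \<forall>y\<in>G. x * y \<in> G) \<and> (\<forall>x\<in>G. \<exists>y\<in>G. x * y = 1)"

text \<open>T(R): the unique subgroup of R^\<times> mapped bijectively (hence isomorphically, being a
  group homomorphism) onto the unit group (R/m)^\<times> = (R/m) - {0 + m} by reduction mod m.\<close>
definition teich :: "'a::comm_ring_1 set \<Rightarrow> 'a set" where
  "teich m = (THE T. unit_subgroup T \<and>
      bij_betw (res_class m) T (residue_ring m - {res_class m 0}))"

definition teich_bar :: "'a::comm_ring_1 set \<Rightarrow> 'a set" where
  "teich_bar m = insert 0 (teich m)"

definition is_subring :: "'a::comm_ring_1 set \<Rightarrow> bool" where
  "is_subring S \<longleftrightarrow> 0 \<in> S \<and> 1 \<in> S \<and> (\<forall>x\<in>S. \<forall>y\<in>S. x + y \<in> S \<and> x - y \<in> S \<and> x * y \<in> S)"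

text \<open>A subring S of the local ring (R,m) has residue field S/(m \<inter> S), naturally embedded
  in R/m; it equals R/m iff this embedding is onto, i.e. every residue class of R meets S.\<close>
definition same_residue_field :: "'a::comm_ring_1 set \<Rightarrow> 'a set \<Rightarrow> bool" where
  "same_residue_field m S \<longleftrightarrow> (\<forall>x. \<exists>s\<in>S. x - s \<in> m)"

end

theory Submission
  imports Defs
begin

locale star =
  fixes m :: "'a::comm_ring_1 set" and p N q :: nat
  assumes cs: "cond_star m p N q"
begin

lemma ideal: "is_ideal m" and notU: "m \<noteq> UNIV" and maxl: "\<And>J. is_ideal J \<Longrightarrow> m \<subseteq> J \<Longrightarrow> J = m \<or> J = UNIV"
  and pr: "prime p" and chr: "CHAR('a) = p^N" and fin: "finite (residue_ring m)"
  and nil: "nilpotent_ideal m"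
  using cs unfolding cond_star_def maximal_ideal_def by auto

lemma m0: "0 \<in> m" using ideal unfolding is_ideal_def by auto
lemma madd: "x \<in> m \<Longrightarrow> y \<in> m \<Longrightarrow> x + y \<in> m" using ideal unfolding is_ideal_def by auto
lemma mmul: "x \<in> m \<Longrightarrow> r * x \<in> m" using ideal unfolding is_ideal_def by auto
lemma mmul2: "x \<in> m \<Longrightarrow> x * r \<in> m" using mmul[of x r] by (simp add: mult.commute)
lemma mneg: "x \<in> m \<Longrightarrow> - x \<in> m" using mmul[of x "-1"] by simp
lemma mdiff: "x \<in> m \<Longrightarrow> y \<in> m \<Longrightarrow> x - y \<in> m" using madd[OF _ mneg[of y]] by simp

lemma one_notin: "1 \<notin> m"
proof
  assume "1 \<in> m"
  then have "\<And>r. r \<in> m" using mmul[of 1] by (metis mult.right_neutral)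
  then show False using notU by auto
qed

lemma msum: "finite A \<Longrightarrow> (\<And>i. i \<in> A \<Longrightarrow> f i \<in> m) \<Longrightarrow> sum f A \<in> m"
  by (induction A rule: finite_induct) (auto simp: m0 madd)

definition nn where "nn = (SOME n. \<forall>xs. length xs = n \<and> set xs \<subseteq> m \<longrightarrow> prod_list xs = 0)"

lemma nn_prop: "length xs = nn \<Longrightarrow> set xs \<subseteq> m \<Longrightarrow> prod_list xs = 0"
proof -
  have "\<exists>n. \<forall>xs. length xs = n \<and> set xs \<subseteq> m \<longrightarrow> prod_list xs = 0"
    using nil unfolding nilpotent_ideal_def by auto
  then have "\<forall>xs. length xs = nn \<and> set xs \<subseteq> m \<longrightarrow> prod_list xs = 0"
    unfolding nn_def by (rule someI_ex)
  then show "length xs = nn \<Longrightarrow> set xs \<subseteq> m \<Longrightarrow> prod_list xs = 0" by auto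
qed

lemma prod_ge: "length xs \<ge> nn \<Longrightarrow> set xs \<subseteq> m \<Longrightarrow> prod_list xs = 0"
proof -
  assume a: "length xs \<ge> nn" "set xs \<subseteq> m"
  have "prod_list (take nn xs) = 0"
    using a by (intro nn_prop) (auto dest: in_set_takeD)
  moreover have "xs = take nn xs @ drop nn xs" by simp
  ultimately show ?thesis by (metis mult_zero_left prod_list.append)
qed

lemma pow_zero: "d \<in> m \<Longrightarrow> k \<ge> nn \<Longrightarrow> d ^ k = 0"
proof -
  assume "d \<in> m" "k \<ge> nn"
  moreover have "set (replicate k d) \<subseteq> m" using \<open>d \<in> m\<close> by (cases k) auto
  ultimately show ?thesis using prod_ge[of "replicate k d"] by auto
qed

lemma unit: "x \<notin> m \<Longrightarrow> \<exists>y. x * y = 1"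
proof -
  assume xm: "x \<notin> m"
  define J where "J = {r * x + y | r y. y \<in> m}"
  have "is_ideal J" unfolding is_ideal_def J_def
  proof (intro conjI ballI allI)
    show "0 \<in> {r * x + y |r y. y \<in> m}" using m0 by (auto intro!: exI[of _ 0])
  next
    fix a b assume "a \<in> {r * x + y |r y. y \<in> m}" "b \<in> {r * x + y |r y. y \<in> m}"
    then obtain r1 y1 r2 y2 where "a = r1 * x + y1" "y1 \<in> m" "b = r2 * x + y2" "y2 \<in> m" by auto
    then have "a + b = (r1 + r2) * x + (y1 + y2)" "y1 + y2 \<in> m" by (auto simp: algebra_simps madd)
    then show "a + b \<in> {r * x + y |r y. y \<in> m}" by blast
  next
    fix s a assume "a \<in> {r * x + y |r y. y \<in> m}"
    then obtain r1 y1 where "a = r1 * x + y1" "y1 \<in> m" by auto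
    then have "s * a = (s * r1) * x + (s * y1)" "s * y1 \<in> m" by (auto simp: algebra_simps mmul)
    then show "s * a \<in> {r * x + y |r y. y \<in> m}" by blast
  qed
  moreover have "m \<subseteq> J"
  proof
    fix z assume "z \<in> m"
    moreover have "z = 0 * x + z" by simp
    ultimately show "z \<in> J" unfolding J_def by blast
  qed
  moreover have "x \<in> J"
  proof -
    have "x = 1 * x + 0" by simp
    then show ?thesis unfolding J_def using m0 by blast
  qed
  ultimately have "J = UNIV" using maxl xm by blast
  then have "1 \<in> J" by simp
  then obtain r y where ry: "1 = r * x + y" "y \<in> m" unfolding J_def by blast
  have "y ^ nn = 0" using pow_zero ry by auto
  then have "(1 - y) * (\<Sum>i<nn. y^(nn - Suc i)) = 1" using one_diff_power_eq'[of y nn] by simp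
  moreover have "1 - y = r * x" using ry by (simp add: algebra_simps)
  ultimately have "x * (r * (\<Sum>i<nn. y^(nn - Suc i))) = 1" by (simp add: algebra_simps)
  then show ?thesis by blast
qed

lemma primem: "a * b \<in> m \<Longrightarrow> a \<notin> m \<Longrightarrow> b \<in> m"
proof -
  assume "a * b \<in> m" "a \<notin> m"
  then obtain y where "a * y = 1" using unit by blast
  then have "b = y * (a * b)" by (metis mult.assoc mult.commute mult_1)
  then show ?thesis using mmul \<open>a * b \<in> m\<close> by metis
qed

lemma powm: "x ^ k \<in> m \<Longrightarrow> x \<in> m"
proof (induction k)
  case 0 then show ?case using one_notin by simp
next
  case (Suc k) then show ?case using primem by (metis power_Suc)
qed

lemma p_in_m: "of_nat p \<in> m"
proof -
  have "(of_nat p :: 'a) ^ N = of_nat (p ^ N)" by simp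
  also have "\<dots> = 0" using chr by (metis of_nat_CHAR)
  finally show ?thesis using powm m0 by metis
qed

lemma pge: "p \<ge> 2" using pr prime_ge_2_nat by blast

lemma binp: "\<exists>r. (a + b :: 'a) ^ p - a ^ p - b ^ p = of_nat p * r"
proof -
  define g where "g k = (of_nat ((p choose k) div p) :: 'a) * a ^ k * b ^ (p - k)" for k
  have fk: "(of_nat (p choose k) :: 'a) * a ^ k * b ^ (p - k) = of_nat p * g k" if "k \<in> {1..<p}" for k
  proof -
    have "p dvd (p choose k)" using that pr by (intro dvd_choose_prime) auto
    then have "p choose k = p * ((p choose k) div p)" by simp
    then have "(of_nat (p choose k) :: 'a) = of_nat p * of_nat ((p choose k) div p)"
      by (metis of_nat_mult)
    then show ?thesis unfolding g_def by (simp add: algebra_simps)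
  qed
  have dec: "{..p} = insert 0 (insert p {1..<p})" using pge by auto
  have "(a+b)^p = (\<Sum>k\<le>p. of_nat (p choose k) * a^k * b^(p-k))" by (rule binomial_ring)
  also have "\<dots> = b ^ p + (a ^ p + (\<Sum>k\<in>{1..<p}. of_nat (p choose k) * a^k * b^(p-k)))"
    unfolding dec using pge by (simp add: sum.insert)
  also have "(\<Sum>k\<in>{1..<p}. (of_nat (p choose k) :: 'a) * a^k * b^(p-k)) = (\<Sum>k\<in>{1..<p}. of_nat p * g k)"
    by (rule sum.cong) (auto simp: fk)
  also have "\<dots> = of_nat p * (\<Sum>k\<in>{1..<p}. g k)" by (simp add: sum_distrib_left)
  finally have "(a+b)^p = b ^ p + (a ^ p + of_nat p * (\<Sum>k\<in>{1..<p}. g k))" .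
  then have "(a+b)^p - a^p - b^p = of_nat p * (\<Sum>k\<in>{1..<p}. g k)" by simp
  then show ?thesis by blast
qed

lemma binP: "\<exists>r. (a + b :: 'a) ^ (p ^ K) - a ^ (p ^ K) - b ^ (p ^ K) = of_nat p * r"
proof (induction K)
  case 0 then show ?case by (intro exI[of _ 0]) simp
next
  case (Suc K)
  let ?A = "a ^ (p ^ K)" and ?B = "b ^ (p ^ K)"
  from Suc obtain r where r: "(a + b) ^ (p ^ K) = (?A + ?B) + of_nat p * r"
    by (metis add_diff_cancel_left' diff_add_cancel diff_diff_eq)
  obtain r1 where r1: "((?A + ?B) + of_nat p * r) ^ p - (?A + ?B) ^ p - (of_nat p * r) ^ p = of_nat p * r1"
    using binp by blast
  obtain r2 where r2: "(?A + ?B) ^ p - ?A ^ p - ?B ^ p = of_nat p * r2"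
    using binp by blast
  have e: "(of_nat p * r :: 'a) ^ p = of_nat p * (r * (of_nat p * r) ^ (p - 1))"
  proof -
    have "p = Suc (p - 1)" using pge by simp
    then have "(of_nat p * r :: 'a) ^ p = (of_nat p * r) * (of_nat p * r) ^ (p - 1)" by (metis power_Suc)
    then show ?thesis by (simp only: mult.assoc)
  qed
  have pw: "\<And>x::'a. x ^ (p ^ Suc K) = (x ^ (p ^ K)) ^ p"
    by (simp add: power_mult[symmetric] mult.commute)
  have lin: "\<And>X U W A B c r1 r2 s :: 'a. X - U - W = c * r1 \<Longrightarrow> U - A - B = c * r2 \<Longrightarrow> W = c * s
      \<Longrightarrow> X - A - B = c * (r1 + r2 + s)"
    by (simp add: algebra_simps)
  show ?case unfolding pw r
    using lin[OF r1 r2 e] by blast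
qed

lemma pR_m: "of_nat p * r \<in> m" using p_in_m mmul2 by blast

lemma frob_m: "x - y \<in> m \<Longrightarrow> \<exists>e\<in>m. x ^ p - y ^ p = e * (x - y)"
proof -
  assume xy: "x - y \<in> m"
  define e where "e = (\<Sum>i<p. y^(p - Suc i) * x^i)"
  have "x ^ p - y ^ p = (x - y) * e" unfolding e_def by (rule power_diff_sumr2)
  have xi: "x ^ i - y ^ i \<in> m" for i
    using power_diff_sumr2[of x i y] xy mmul2 by metis
  have d1: "(\<Sum>i<p. y^(p - Suc i) * (x^i - y^i)) + (\<Sum>i<p. y^(p - Suc i) * y^i) = e"
    unfolding e_def sum.distrib[symmetric] by (rule sum.cong) (simp_all add: right_diff_distrib)
  have d2: "(\<Sum>i<p. y^(p - Suc i) * y^i) = (\<Sum>i<p. y^(p - 1))"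
  proof (rule sum.cong)
    fix i assume "i \<in> {..<p}"
    then have "p - Suc i + i = p - 1" by auto
    then show "y^(p - Suc i) * y^i = y^(p - 1)" by (metis power_add)
  qed simp
  have s1: "(\<Sum>i<p. y^(p - Suc i) * (x^i - y^i)) \<in> m"
    by (rule msum) (auto intro: mmul xi)
  have s2: "(\<Sum>i<p. y^(p - Suc i) * y^i) \<in> m" unfolding d2 using pR_m[of "y^(p-1)"] by simp
  have "e \<in> m" using madd[OF s1 s2] d1 by simp
  then show ?thesis using \<open>x ^ p - y ^ p = (x - y) * e\<close> by (metis mult.commute)
qed

lemma pw: "(x::'a) ^ (p ^ Suc K) = (x ^ (p ^ K)) ^ p"
  by (simp add: power_mult[symmetric] mult.commute)

lemma frob_iter: "x - y \<in> m \<Longrightarrow> \<exists>es. length es = K \<and> set es \<subseteq> m \<and> x^(p^K) - y^(p^K) = prod_list es * (x - y)"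
proof (induction K)
  case 0 then show ?case by (intro exI[of _ "[]"]) simp
next
  case (Suc K)
  then obtain es where es: "length es = K" "set es \<subseteq> m" "x^(p^K) - y^(p^K) = prod_list es * (x - y)" by blast
  then have "x^(p^K) - y^(p^K) \<in> m" using Suc.prems mmul by simp
  then obtain e where e: "e \<in> m" "(x^(p^K))^p - (y^(p^K))^p = e * (x^(p^K) - y^(p^K))" using frob_m by blast
  have "x^(p^Suc K) - y^(p^Suc K) = prod_list (e # es) * (x - y)" unfolding pw e(2) es(3) by (simp add: mult.assoc)
  then show ?case using es e by (intro exI[of _ "e # es"]) auto
qed

definition PP where "PP = p ^ nn"

lemma PP_ge: "PP \<ge> nn"
proof -
  have "nn < 2 ^ nn" by (rule less_exp)
  moreover have "(2::nat) ^ nn \<le> p ^ nn" using pge by (intro power_mono) auto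
  ultimately show ?thesis unfolding PP_def by linarith
qed

lemma constP: "x - y \<in> m \<Longrightarrow> x ^ PP = y ^ PP"
proof -
  assume xy: "x - y \<in> m"
  obtain es where es: "length es = nn" "set es \<subseteq> m" "x^PP - y^PP = prod_list es * (x - y)"
    using frob_iter[OF xy, of nn] unfolding PP_def by blast
  have "prod_list ((x - y) # es) = 0" using es xy by (intro prod_ge) auto
  then have "x^PP - y^PP = 0" using es(3) by (simp add: mult.commute)
  then show ?thesis by simp
qed

lemma injP: "x ^ PP - y ^ PP \<in> m \<Longrightarrow> x - y \<in> m"
proof -
  assume a: "x ^ PP - y ^ PP \<in> m"
  obtain r where r: "((x - y) + y) ^ PP - (x - y) ^ PP - y ^ PP = of_nat p * r"
    using binP[of "x - y" y nn] unfolding PP_def by blast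
  have "(x - y) ^ PP = (x ^ PP - y ^ PP) - of_nat p * r" using r by (simp add: algebra_simps)
  then have "(x - y) ^ PP \<in> m" using mdiff[OF a pR_m] by simp
  then show ?thesis by (rule powm)
qed

lemma res_eq: "res_class m a = res_class m b \<longleftrightarrow> a - b \<in> m"
proof
  assume "res_class m a = res_class m b"
  moreover have "a \<in> res_class m a" unfolding res_class_def using m0 by simp
  ultimately show "a - b \<in> m" unfolding res_class_def by auto
next
  assume ab: "a - b \<in> m"
  have "y - a \<in> m \<longleftrightarrow> y - b \<in> m" for y
  proof
    assume "y - a \<in> m"
    moreover have "y - b = (y - a) + (a - b)" by simp
    ultimately show "y - b \<in> m" using madd[OF _ ab] by metis
  next
    assume "y - b \<in> m"
    moreover have "y - a = (y - b) - (a - b)" by simp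
    ultimately show "y - a \<in> m" using mdiff[OF _ ab] by metis
  qed
  then show "res_class m a = res_class m b" unfolding res_class_def by auto
qed

lemma surjP: "\<exists>y. x - y ^ PP \<in> m"
proof -
  define F where "F = residue_ring m"
  define h where "h C = res_class m ((SOME z. z \<in> C) ^ PP)" for C
  have hres: "h (res_class m a) = res_class m (a ^ PP)" for a
  proof -
    have "a \<in> res_class m a" unfolding res_class_def using m0 by simp
    then have "(SOME z. z \<in> res_class m a) \<in> res_class m a" by (rule someI)
    then have "(SOME z. z \<in> res_class m a) ^ PP = a ^ PP" unfolding res_class_def by (intro constP) auto
    then show ?thesis unfolding h_def by simp
  qed
  have "h ` F \<subseteq> F" unfolding F_def residue_ring_def using hres by auto
  moreover have "inj_on h F"
  proof (rule inj_onI)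
    fix C D assume "C \<in> F" "D \<in> F" "h C = h D"
    then obtain a b where ab: "C = res_class m a" "D = res_class m b" unfolding F_def residue_ring_def by auto
    then have "a ^ PP - b ^ PP \<in> m" using \<open>h C = h D\<close> hres res_eq by simp
    then show "C = D" using ab injP res_eq by blast
  qed
  ultimately have "h ` F = F" using fin endo_inj_surj unfolding F_def by blast
  moreover have "res_class m x \<in> F" unfolding F_def residue_ring_def by simp
  ultimately obtain C where "C \<in> F" "h C = res_class m x" by (metis imageE)
  then obtain y where "C = res_class m y" unfolding F_def residue_ring_def by auto
  then have "res_class m (y ^ PP) = res_class m x" using \<open>h C = res_class m x\<close> hres by simp
  then have "x - y ^ PP \<in> m" using res_eq by blast
  then show ?thesis by blast
qed

definition VV where "VV = {x ^ PP | x. x \<notin> m}"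

lemma PP_pos: "PP \<ge> 1" unfolding PP_def using pge by simp

lemma pow_in: "y \<in> m \<Longrightarrow> y ^ PP \<in> m"
proof -
  assume "y \<in> m"
  have "PP = Suc (PP - 1)" using PP_pos by simp
  then have "y ^ PP = y * y ^ (PP - 1)" by (metis power_Suc)
  then show ?thesis using mmul2[OF \<open>y \<in> m\<close>] by simp
qed

lemma V_notin: "v \<in> VV \<Longrightarrow> v \<notin> m" unfolding VV_def using powm by blast

lemma V_one: "1 \<in> VV" unfolding VV_def using one_notin by (auto intro!: exI[of _ 1])

lemma V_mult: "v \<in> VV \<Longrightarrow> w \<in> VV \<Longrightarrow> v * w \<in> VV"
proof -
  assume "v \<in> VV" "w \<in> VV"
  then obtain a b where ab: "v = a ^ PP" "w = b ^ PP" "a \<notin> m" "b \<notin> m" unfolding VV_def by auto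
  then have "a * b \<notin> m" using primem by blast
  moreover have "v * w = (a * b) ^ PP" using ab by (simp add: power_mult_distrib)
  ultimately show ?thesis unfolding VV_def by blast
qed

lemma V_prop: "unit_subgroup VV \<and> bij_betw (res_class m) VV (residue_ring m - {res_class m 0})"
proof
  show "unit_subgroup VV" unfolding unit_subgroup_def
  proof (intro conjI ballI)
    show "VV \<subseteq> {x. x dvd 1}"
    proof
      fix v assume "v \<in> VV"
      then obtain a where a: "v = a ^ PP" "a \<notin> m" unfolding VV_def by auto
      then obtain b where "a * b = 1" using unit by blast
      then have "v * b ^ PP = 1" using a by (metis power_mult_distrib power_one)
      then show "v \<in> {x. x dvd 1}" by (metis dvd_triv_left mem_Collect_eq)
    qed
    show "1 \<in> VV" by (rule V_one)
    fix v w assume "v \<in> VV" "w \<in> VV" then show "v * w \<in> VV" by (rule V_mult)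
  next
    fix v assume "v \<in> VV"
    then obtain a where a: "v = a ^ PP" "a \<notin> m" unfolding VV_def by auto
    then obtain b where b: "a * b = 1" using unit by blast
    then have "b \<notin> m" using one_notin mmul by metis
    moreover have "v * b ^ PP = 1" using a b by (metis power_mult_distrib power_one)
    ultimately show "\<exists>y\<in>VV. v * y = 1" unfolding VV_def by blast
  qed
next
  show "bij_betw (res_class m) VV (residue_ring m - {res_class m 0})" unfolding bij_betw_def
  proof
    show "inj_on (res_class m) VV"
    proof (rule inj_onI)
      fix v w assume "v \<in> VV" "w \<in> VV" "res_class m v = res_class m w"
      then obtain a b where ab: "v = a ^ PP" "w = b ^ PP" unfolding VV_def by auto
      then have "a - b \<in> m" using injP res_eq \<open>res_class m v = res_class m w\<close> by blast
      then show "v = w" using constP ab by simp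
    qed
    show "res_class m ` VV = residue_ring m - {res_class m 0}"
    proof
      show "res_class m ` VV \<subseteq> residue_ring m - {res_class m 0}"
        using V_notin res_eq unfolding residue_ring_def by fastforce
      show "residue_ring m - {res_class m 0} \<subseteq> res_class m ` VV"
      proof
        fix C assume "C \<in> residue_ring m - {res_class m 0}"
        then obtain x where x0: "C = res_class m x" "C \<noteq> res_class m 0" unfolding residue_ring_def by auto
        then have x: "C = res_class m x" "x \<notin> m" using res_eq[of x 0] by auto
        obtain y where y: "x - y ^ PP \<in> m" using surjP by blast
        have "y \<notin> m"
        proof
          assume "y \<in> m"
          then have "y ^ PP \<in> m" by (rule pow_in)
          then have "(x - y ^ PP) + y ^ PP \<in> m" using madd y by blast
          then show False using x by simp
        qed
        then have "y ^ PP \<in> VV" unfolding VV_def by blast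
        moreover have "C = res_class m (y ^ PP)" using x y res_eq by simp
        ultimately show "C \<in> res_class m ` VV" by blast
      qed
    qed
  qed
qed

lemma V_unique:
  assumes us: "unit_subgroup T" and bj: "bij_betw (res_class m) T (residue_ring m - {res_class m 0})"
  shows "T = VV"
proof -
  have finT: "finite T" using bj fin by (metis bij_betw_finite finite_Diff)
  have Tnot: "t \<notin> m" if "t \<in> T" for t
  proof -
    have "res_class m t \<noteq> res_class m 0" using bj that unfolding bij_betw_def by auto
    then show ?thesis using res_eq by auto
  qed
  have Tpow: "t ^ k \<in> T" if "t \<in> T" for t k
    using that us unfolding unit_subgroup_def by (induction k) auto
  have injT: "inj_on (res_class m) T" using bj by (rule bij_betw_imp_inj_on)
  have "(\<lambda>t. t ^ PP) ` T = T"
  proof (rule endo_inj_surj[OF finT])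
    show "(\<lambda>t. t ^ PP) ` T \<subseteq> T" using Tpow by auto
    show "inj_on (\<lambda>t. t ^ PP) T"
    proof (rule inj_onI)
      fix t s assume "t \<in> T" "s \<in> T" "t ^ PP = s ^ PP"
      then have "t - s \<in> m" using injP m0 by simp
      then show "t = s" using injT \<open>t \<in> T\<close> \<open>s \<in> T\<close> res_eq inj_onD by metis
    qed
  qed
  then have surjT: "\<exists>s\<in>T. t = s ^ PP" if "t \<in> T" for t using that by (metis imageE)
  show ?thesis
  proof
    show "T \<subseteq> VV" unfolding VV_def using surjT Tnot by blast
    show "VV \<subseteq> T"
    proof
      fix v assume "v \<in> VV"
      then obtain x where x: "v = x ^ PP" "x \<notin> m" unfolding VV_def by auto
      have "res_class m v \<in> residue_ring m - {res_class m 0}"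
        using V_notin[OF \<open>v \<in> VV\<close>] res_eq unfolding residue_ring_def by auto
      then obtain t where t: "t \<in> T" "res_class m t = res_class m v"
        using bj unfolding bij_betw_def by (metis imageE)
      then obtain s where s: "s \<in> T" "t = s ^ PP" using surjT by blast
      have "s ^ PP - x ^ PP \<in> m" using t s x res_eq by simp
      then have "s - x \<in> m" by (rule injP)
      then have "t = v" using constP s x by simp
      then show "v \<in> T" using t by simp
    qed
  qed
qed

lemma teich_eq: "teich m = VV"
  unfolding teich_def using V_prop V_unique by (intro the_equality) auto

lemma main:
  assumes I: "is_ideal I" and pI: "\<forall>r. of_nat p * r \<in> I"
  shows "is_subring {t + x | t x. t \<in> teich_bar m \<and> x \<in> I} \<and>
         same_residue_field m {t + x | t x. t \<in> teich_bar m \<and> x \<in> I}"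
proof -
  define S where "S = {t + x | t x. t \<in> teich_bar m \<and> x \<in> I}"
  have TB: "teich_bar m = insert 0 VV" unfolding teich_bar_def teich_eq ..
  have i0: "0 \<in> I" and iadd: "\<And>x y. x \<in> I \<Longrightarrow> y \<in> I \<Longrightarrow> x + y \<in> I"
    and imul: "\<And>r x. x \<in> I \<Longrightarrow> r * x \<in> I" using I unfolding is_ideal_def by auto
  have imul2: "\<And>r x. x \<in> I \<Longrightarrow> x * r \<in> I" using imul by (metis mult.commute)
  have ineg: "\<And>x. x \<in> I \<Longrightarrow> - x \<in> I" using imul[of _ "-1"] by simp
  have Sin: "t \<in> insert 0 VV \<Longrightarrow> x \<in> I \<Longrightarrow> t + x \<in> S" for t x unfolding S_def TB by blast
  have Sout: "z \<in> S \<Longrightarrow> \<exists>t x. z = t + x \<and> t \<in> insert 0 VV \<and> x \<in> I" for z unfolding S_def TB by blast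
  have TBmul: "t \<in> insert 0 VV \<Longrightarrow> s \<in> insert 0 VV \<Longrightarrow> t * s \<in> insert 0 VV" for t s
    using V_mult by auto
  have TBadd: "\<exists>u\<in>insert 0 VV. t + s - u \<in> I" if ht: "t \<in> insert 0 VV" and hs: "s \<in> insert 0 VV" for t s
  proof (cases "t = 0 \<or> s = 0")
    case True
    show ?thesis
    proof (cases "t = 0")
      case True
      then have "t + s - s \<in> I" using i0 by simp
      then show ?thesis using hs by blast
    next
      case False
      then have "t + s - t \<in> I" using i0 \<open>t = 0 \<or> s = 0\<close> by simp
      then show ?thesis using ht by blast
    qed
  next
    case False
    then obtain a b where ab: "t = a ^ PP" "s = b ^ PP" using ht hs False unfolding VV_def by auto
    obtain r where r: "(a + b) ^ PP - a ^ PP - b ^ PP = of_nat p * r"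
      using binP[of a b nn] unfolding PP_def by blast
    have d: "t + s - (a + b) ^ PP = of_nat p * (- r)" using r ab by (simp add: algebra_simps)
    have dI: "t + s - (a + b) ^ PP \<in> I" unfolding d using pI by blast
    show ?thesis
    proof (cases "a + b \<in> m")
      case True
      then have "(a + b) ^ PP = 0" using pow_zero PP_ge by blast
      then have "t + s - 0 \<in> I" using dI by simp
      then show ?thesis by blast
    next
      case False
      then have "(a + b) ^ PP \<in> VV" unfolding VV_def by blast
      then show ?thesis using dI by blast
    qed
  qed
  have Sadd: "z \<in> S \<Longrightarrow> w \<in> S \<Longrightarrow> z + w \<in> S" for z w
  proof -
    assume "z \<in> S" "w \<in> S"
    then obtain t x s y where tx: "z = t + x" "t \<in> insert 0 VV" "x \<in> I" "w = s + y" "s \<in> insert 0 VV" "y \<in> I"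
      using Sout by metis
    then obtain u where u: "u \<in> insert 0 VV" "t + s - u \<in> I" using TBadd by blast
    have eq: "z + w = u + ((t + s - u) + (x + y))" using tx by (simp add: algebra_simps)
    have "(t + s - u) + (x + y) \<in> I" using u iadd tx by simp
    then have "u + ((t + s - u) + (x + y)) \<in> S" using Sin u by blast
    then show ?thesis unfolding eq .
  qed
  have S0: "0 \<in> S" using Sin[of 0 0] i0 by simp
  have S1: "1 \<in> S" using Sin[of 1 0] i0 V_one by simp
  have Snat: "z \<in> S \<Longrightarrow> of_nat k * z \<in> S" for z k
    by (induction k) (auto simp: S0 Sadd algebra_simps)
  have Sneg: "z \<in> S \<Longrightarrow> - z \<in> S" for z
  proof -
    assume "z \<in> S"
    have "p ^ N \<ge> 1" using pge by simp
    then have "p ^ N = (p ^ N - 1) + 1" by simp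
    then have "(of_nat (p ^ N - 1) :: 'a) + 1 = of_nat (p ^ N)" by (metis of_nat_1 of_nat_add)
    also have "\<dots> = 0" using chr by (metis of_nat_CHAR)
    finally have c: "(of_nat (p ^ N - 1) :: 'a) + 1 = 0" .
    have "(of_nat (p ^ N - 1) + 1) * z = 0" unfolding c by simp
    then have "z + of_nat (p ^ N - 1) * z = 0" by (simp add: distrib_right add.commute)
    then have "- z = of_nat (p ^ N - 1) * z" by (simp add: neg_eq_iff_add_eq_0)
    then show ?thesis using Snat \<open>z \<in> S\<close> by simp
  qed
  have Smul: "z \<in> S \<Longrightarrow> w \<in> S \<Longrightarrow> z * w \<in> S" for z w
  proof -
    assume "z \<in> S" "w \<in> S"
    then obtain t x s y where tx: "z = t + x" "t \<in> insert 0 VV" "x \<in> I" "w = s + y" "s \<in> insert 0 VV" "y \<in> I"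
      using Sout by metis
    have "z * w = t * s + (t * y + x * s + x * y)" using tx by (simp add: algebra_simps)
    moreover have "t * y + x * s + x * y \<in> I" using tx imul imul2 iadd by simp
    moreover have "t * s \<in> insert 0 VV" using TBmul tx by blast
    ultimately show ?thesis using Sin by metis
  qed
  have Sdiff: "z \<in> S \<Longrightarrow> w \<in> S \<Longrightarrow> z - w \<in> S" for z w
    using Sadd[of z "- w"] Sneg[of w] by simp
  have "is_subring S" unfolding is_subring_def
  proof (intro conjI ballI)
    show "0 \<in> S" by (rule S0)
    show "1 \<in> S" by (rule S1)
    fix z w assume "z \<in> S" "w \<in> S"
    then show "z + w \<in> S" "z - w \<in> S" "z * w \<in> S" using Sadd Sdiff Smul by blast+
  qed
  moreover have "same_residue_field m S" unfolding same_residue_field_def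
  proof
    fix x
    show "\<exists>s\<in>S. x - s \<in> m"
    proof (cases "x \<in> m")
      case True
      then have "x - 0 \<in> m" by simp
      then show ?thesis using S0 by blast
    next
      case False
      obtain y where y: "x - y ^ PP \<in> m" using surjP by blast
      have "y \<notin> m"
      proof
        assume "y \<in> m"
        then have "y ^ PP \<in> m" by (rule pow_in)
        then have "(x - y ^ PP) + y ^ PP \<in> m" using madd y by blast
        then show False using False by simp
      qed
      then have "y ^ PP \<in> VV" unfolding VV_def by blast
      then have "y ^ PP + 0 \<in> S" using Sin i0 by blast
      then show ?thesis using y by auto
    qed
  qed
  ultimately show ?thesis unfolding S_def by blast
qed

end

theorem corollary26:
  fixes m :: "'a::comm_ring_1 set" and p N q :: nat
  assumes "cond_star m p N q"
  shows "(is_subring {t + x | t x. t \<in> teich_bar m \<and> x \<in> {of_nat p * r | r. True}}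
       \<and> same_residue_field m {t + x | t x. t \<in> teich_bar m \<and> x \<in> {of_nat p * r | r. True}})
    \<and> (\<forall>I. is_ideal I \<and> (\<forall>x\<in>m. \<forall>y\<in>m. x * y \<in> I) \<and> (\<forall>r. of_nat p * r \<in> I) \<longrightarrow>
       is_subring {t + x | t x. t \<in> teich_bar m \<and> x \<in> I} \<and>
       same_residue_field m {t + x | t x. t \<in> teich_bar m \<and> x \<in> I})"
proof -
  interpret star m p N q using assms by unfold_locales
  have "is_ideal ({of_nat p * r | r. True} :: 'a set)"
    unfolding is_ideal_def
  proof (intro conjI ballI allI)
    show "(0::'a) \<in> {of_nat p * r |r. True}" by (auto intro!: exI[of _ 0])
  next
    fix x y :: 'a assume "x \<in> {of_nat p * r |r. True}" "y \<in> {of_nat p * r |r. True}"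
    then obtain a b where "x = of_nat p * a" "y = of_nat p * b" by auto
    then have "x + y = of_nat p * (a + b)" by (simp add: algebra_simps)
    then show "x + y \<in> {of_nat p * r |r. True}" by blast
  next
    fix s x :: 'a assume "x \<in> {of_nat p * r |r. True}"
    then obtain a where "x = of_nat p * a" by auto
    then have "s * x = of_nat p * (s * a)" by (simp add: algebra_simps)
    then show "s * x \<in> {of_nat p * r |r. True}" by blast
  qed
  moreover have "\<forall>r. (of_nat p :: 'a) * r \<in> {of_nat p * r |r. True}" by blast
  ultimately show ?thesis using main by blast
qed

end
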